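(* Consider an ontological model with two-element ontic state space $\Lambda=\{0,1\}$. Four preparation procedures $P_T,P_{\tilde T},P_\eta,P_{\tilde\eta}$ are represented by probability distributions (epistemic states) $\mu_T,\mu_{\tilde T},\mu_\eta,\mu_{\tilde\eta}$ on $\Lambda$, and these satisfy the preparation-noncontextuality constraint $$\mu_T(i)+\mu_{\tilde T}(i)=\mu_\eta(i)+\mu_{\tilde\eta}(i)\qquad\text{for all } i\in\Lambda .$$ A binary two-copy comparison measurement $M_{\mathrm{swap}}$ with outcomes pass/fail is represented by the SWAP-like response function $\xi_{\mathrm{pass}}(i,j)$ on pairs of ontic states given by the matrix $$\Xi_q=\begin{pmatrix}1&q\\ q&1\end{pmatrix},\qquad q\in[0,1),$$ i.e. $\xi_{\mathrm{pass}}(i,i)=1$ and $\xi_{\mathrm{pass}}(i,j)=q$ for $i\neq j$. Assume further there is a sharp single-copy binary test $M_T=\{T,\tilde T\}$, represented by a response function $\xi_{T}:\Lambda\to[0,1]$ (with $\xi_{\tilde T}=1-\xi_T$), such that $$p(T|M_T,P_T)=\sum_i \xi_T(i)\mu_T(i)=1,\qquad p(T|M_T,P_{\tilde T})=\sum_i\xi_T(i)\mu_{\tilde T}(i)=0,$$ and let $c:=p(T|M_T,P_\eta)=\sum_i\xi_T(i)\mu_\eta(i)$ be the confusability. Let $\eta_1,\eta_2\ge0$ with $\eta_1+\eta_2=1$ be given priors. Define $$p_{\mathrm{pur}}=\sum_{i,j}\xi_{\mathrm{pass}}(i,j)\mu_T(i)\mu_T(j),\qquad p_{\mathrm{mix}}^{(p)}=\sum_{i,j}\xi_{\mathrm{pass}}(i,j)\mu_T(i)\mu^{(p)}_\eta(j),$$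 where for $p\in S_2$ (identity or swap), $\mu_\eta^{(\mathrm{id})}=\mu_\eta$ and $\mu_\eta^{(\mathrm{swap})}(i)=\mu_\eta(1-i)$, and define the operational discriminability score $$D_{\mathrm{op}}=\max_{p\in S_2}\Big[(2p_{\mathrm{mix}}^{(p)}-1)+2\sqrt{\eta_1\eta_2(1-p_{\mathrm{pur}})}\Big].$$ Then $$D_{\mathrm{op}}\le 1-2(1-q)\min\{c,1-c\}.$$ In particular, after relabeling so that $c\le\tfrac12$, $D_{\mathrm{op}}\le 1-2(1-q)c$.
   Context: In an ontological model each preparation $P$ is represented by a probability distribution $\mu_P$ on the ontic space $\Lambda$, each measurement outcome $k$ of a measurement $M$ by a response function $\xi_{k|M}(\lambda)\in[0,1]$ with $\sum_k\xi_{k|M}=1$, and operational probabilities are $p(k|M,P)=\sum_\lambda\xi_{k|M}(\lambda)\mu_P(\lambda)$. For two-copy measurements on independently prepared systems the pass probability is $\sum_{i,j}\xi_{\mathrm{pass}}(i,j)\mu_P(i)\mu_{P'}(j)$. The constraint $\mu_T+\mu_{\tilde T}=\mu_\eta+\mu_{\tilde\eta}$ expresses preparation noncontextuality applied to the operational equivalence $\tfrac12P_T+\tfrac12P_{\tilde T}\simeq\tfrac12P_\eta+\tfrac12P_{\tilde\eta}$ of 50–50 mixtures. *)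

theory Defs
  imports Complex_Main
begin

definition Lam :: "nat set" where "Lam = {0, 1}"

definition is_distr :: "(nat \<Rightarrow> real) \<Rightarrow> bool" where
  "is_distr \<mu> \<longleftrightarrow> (\<forall>i\<in>Lam. 0 \<le> \<mu> i) \<and> (\<Sum>i\<in>Lam. \<mu> i) = 1"

definition xi_pass :: "real \<Rightarrow> nat \<Rightarrow> nat \<Rightarrow> real" where
  "xi_pass q i j = (if i = j then 1 else q)"

definition two_copy_pass :: "real \<Rightarrow> (nat \<Rightarrow> real) \<Rightarrow> (nat \<Rightarrow> real) \<Rightarrow> real" where
  "two_copy_pass q \<mu> \<nu> = (\<Sum>i\<in>Lam. \<Sum>j\<in>Lam. xi_pass q i j * \<mu> i * \<nu> j)"

definition p_pur :: "real \<Rightarrow> (nat \<Rightarrow> real) \<Rightarrow> real" where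
  "p_pur q \<mu>T = two_copy_pass q \<mu>T \<mu>T"

definition relabel_swap :: "(nat \<Rightarrow> real) \<Rightarrow> nat \<Rightarrow> real" where
  "relabel_swap \<mu> i = \<mu> (1 - i)"

definition D_op :: "real \<Rightarrow> real \<Rightarrow> real \<Rightarrow> (nat \<Rightarrow> real) \<Rightarrow> (nat \<Rightarrow> real) \<Rightarrow> real" where
  "D_op q \<eta>1 \<eta>2 \<mu>T \<mu>\<eta> =
     (let s = 2 * sqrt (\<eta>1 * \<eta>2 * (1 - p_pur q \<mu>T)) in
      max ((2 * two_copy_pass q \<mu>T \<mu>\<eta> - 1) + s)
          ((2 * two_copy_pass q \<mu>T (relabel_swap \<mu>\<eta>) - 1) + s))"

end

theory Submission
  imports Defs
begin

lemma aux:
  fixes q e :: real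
  assumes "0 \<le> q" "q < 1"
  shows "max (2 * (e + q * (1 - e)) - 1) (2 * ((1 - e) + q * e) - 1) \<le> 1 - 2 * (1 - q) * min e (1 - e)"
proof (cases "e * 2 \<le> 1")
  case True
  then have "0 \<le> (1 - q) * (1 - 2 * e)" using assms by simp
  then show ?thesis using True by (simp add: max_def min_def algebra_simps)
next
  case False
  then have "0 \<le> (1 - q) * (2 * e - 1)" using assms by simp
  then show ?thesis using False by (simp add: max_def min_def algebra_simps)
qed

theorem theorem1:
  fixes \<mu>T \<mu>Tt \<mu>\<eta> \<mu>\<eta>t \<xi>T :: "nat \<Rightarrow> real" and q \<eta>1 \<eta>2 c :: real
  assumes "is_distr \<mu>T" and "is_distr \<mu>Tt" and "is_distr \<mu>\<eta>" and "is_distr \<mu>\<eta>t"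
    and "\<forall>i\<in>Lam. \<mu>T i + \<mu>Tt i = \<mu>\<eta> i + \<mu>\<eta>t i"
    and "0 \<le> q" and "q < 1"
    and "\<forall>i\<in>Lam. 0 \<le> \<xi>T i \<and> \<xi>T i \<le> 1"
    and "(\<Sum>i\<in>Lam. \<xi>T i * \<mu>T i) = 1"
    and "(\<Sum>i\<in>Lam. \<xi>T i * \<mu>Tt i) = 0"
    and "c = (\<Sum>i\<in>Lam. \<xi>T i * \<mu>\<eta> i)"
    and "0 \<le> \<eta>1" and "0 \<le> \<eta>2" and "\<eta>1 + \<eta>2 = 1"
  shows "D_op q \<eta>1 \<eta>2 \<mu>T \<mu>\<eta> \<le> 1 - 2 * (1 - q) * min c (1 - c)"
proof -
  have L: "Lam = {0,1}" by (simp add: Lam_def)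
  note A = assms[unfolded is_distr_def L, simplified, unfolded One_nat_def[symmetric]]
  define a where "a = \<mu>T 0"
  define b where "b = \<mu>Tt 0"
  define x0 where "x0 = \<xi>T 0"
  define x1 where "x1 = \<xi>T 1"
  define e where "e = \<mu>\<eta> 0"
  have T1: "\<mu>T 1 = 1 - a" using A(1) a_def by (simp add: One_nat_def; linarith)
  have Tt1: "\<mu>Tt 1 = 1 - b" using A(2) b_def by (simp add: One_nat_def; linarith)
  have e1: "\<mu>\<eta> 1 = 1 - e" using A(3) e_def by (simp add: One_nat_def; linarith)
  have a01: "0 \<le> a" "a \<le> 1" using A(1) a_def by auto
  have b01: "0 \<le> b" "b \<le> 1" using A(2) b_def by auto
  have x01: "0 \<le> x0" "x0 \<le> 1" "0 \<le> x1" "x1 \<le> 1" using A(8) x0_def x1_def by auto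
  have s1: "x0 * a + x1 * (1 - a) = 1" using A(9) T1 a_def x0_def x1_def by simp
  have s2: "x0 * b + x1 * (1 - b) = 0" using A(10) Tt1 b_def x0_def x1_def by simp
  have ce: "c = x0 * e + x1 * (1 - e)" using A(11) e1 e_def x0_def x1_def by simp
  have t1: "(1 - x0) * a = 0" "(1 - x1) * (1 - a) = 0"
  proof -
    have "(1 - x0) * a + (1 - x1) * (1 - a) = 0" using s1 by (simp add: algebra_simps)
    moreover have "(1 - x0) * a \<ge> 0" "(1 - x1) * (1 - a) \<ge> 0" using x01 a01 by simp_all
    ultimately show "(1 - x0) * a = 0" "(1 - x1) * (1 - a) = 0" by linarith+
  qed
  have t2: "x0 * b = 0" "x1 * (1 - b) = 0"
  proof -
    have "x0 * b \<ge> 0" "x1 * (1 - b) \<ge> 0" using x01 b01 by simp_all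
    then show "x0 * b = 0" "x1 * (1 - b) = 0" using s2 by linarith+
  qed
  have cases: "(a = 1 \<and> x0 = 1 \<and> x1 = 0) \<or> (a = 0 \<and> x0 = 0 \<and> x1 = 1)"
  proof (cases "a = 0")
    case True
    then have "x1 = 1" using t1 by simp
    then have "b = 1" using t2 by simp
    then have "x0 = 0" using t2 by simp
    then show ?thesis using True \<open>x1 = 1\<close> by simp
  next
    case False
    then have "x0 = 1" using t1 by simp
    then have "b = 0" using t2 by simp
    then have "x1 = 0" using t2 by simp
    then have "a = 1" using t1 by simp
    then show ?thesis using \<open>x0 = 1\<close> \<open>x1 = 0\<close> by simp
  qed
  have pm1: "two_copy_pass q \<mu>T \<mu>\<eta> = a * e + a * q * (1 - e) + (1 - a) * q * e + (1 - a) * (1 - e)"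
    unfolding two_copy_pass_def L xi_pass_def using T1 e1 a_def e_def by simp
  have pm2: "two_copy_pass q \<mu>T (relabel_swap \<mu>\<eta>) = a * (1 - e) + a * q * e + (1 - a) * q * (1 - e) + (1 - a) * e"
    unfolding two_copy_pass_def L xi_pass_def relabel_swap_def using T1 e1 a_def e_def by simp
  have pp: "p_pur q \<mu>T = a * a + a * q * (1 - a) + (1 - a) * q * a + (1 - a) * (1 - a)"
    unfolding p_pur_def two_copy_pass_def L xi_pass_def using T1 a_def by simp
  from cases show ?thesis
  proof
    assume h: "a = 1 \<and> x0 = 1 \<and> x1 = 0"
    then have "p_pur q \<mu>T = 1" "c = e" using pp ce by simp_all
    then show ?thesis unfolding D_op_def Let_def pm1 pm2 using h aux[OF assms(6,7), of e]
      by (simp add: algebra_simps)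
  next
    assume h: "a = 0 \<and> x0 = 0 \<and> x1 = 1"
    then have P: "p_pur q \<mu>T = 1" and C: "c = 1 - e" using pp ce by simp_all
    have M: "min c (1 - c) = min e (1 - e)" using C by (simp add: min.commute)
    show ?thesis unfolding D_op_def Let_def pm1 pm2 M using h P aux[OF assms(6,7), of e]
      by (simp add: algebra_simps max.commute)
  qed
qed

end
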